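(* Let $(\mathbb X,S)$ be a minimal subshift over a finite alphabet satisfying the Boshernitzan condition, with unique invariant measure $\mu$. Then every eigenvalue $e^{2\pi i\alpha}$ with $\alpha\in\mathbb Q$ of the Koopman operator $f\mapsto f\circ S$ on $L^2(\mathbb X,\mu)$ is a topological eigenvalue of $(\mathbb X,S)$, i.e. admits a continuous eigenfunction.
   Context: Boshernitzan condition: there is a shift-invariant probability measure $\nu$ with $\limsup_n n\min\{\nu[u]:u\in\mathcal L_n(\mathbb X)\}>0$, with $\mathcal L_n$ the length-$n$ words occurring in $\mathbb X$ and $[u]$ the cylinder set of $u$ at position 0. A topological eigenvalue is $z$ with $f\circ S=zf$ for some continuous $f\not\equiv 0$. *)

theory Defs
  imports "HOL-Probability.Probability" "HOL-Library.Liminf_Limsup"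
begin

definition shift_top :: "(int \<Rightarrow> 'a) topology" where
  "shift_top = product_topology (\<lambda>_. discrete_topology UNIV) UNIV"

definition shift :: "(int \<Rightarrow> 'a) \<Rightarrow> (int \<Rightarrow> 'a)" where
  "shift x = (\<lambda>n. x (n + 1))"

definition subshift :: "(int \<Rightarrow> 'a::finite) set \<Rightarrow> bool" where
  "subshift X \<longleftrightarrow> X \<noteq> {} \<and> closedin shift_top X \<and> shift ` X = X"

definition minimal_subshift :: "(int \<Rightarrow> 'a::finite) set \<Rightarrow> bool" where
  "minimal_subshift X \<longleftrightarrow> subshift X \<and>
     (\<forall>Y. Y \<subseteq> X \<and> Y \<noteq> {} \<and> closedin shift_top Y \<and> shift ` Y \<subseteq> Y \<longrightarrow> Y = X)"

definition borel_X :: "(int \<Rightarrow> 'a) set \<Rightarrow> (int \<Rightarrow> 'a) measure" where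
  "borel_X X = sigma X {U. openin (subtopology shift_top X) U}"

definition invariant_prob :: "(int \<Rightarrow> 'a::finite) set \<Rightarrow> (int \<Rightarrow> 'a) measure \<Rightarrow> bool" where
  "invariant_prob X \<nu> \<longleftrightarrow> prob_space \<nu> \<and> sets \<nu> = sets (borel_X X) \<and> space \<nu> = X \<and>
     (\<forall>A \<in> sets \<nu>. emeasure \<nu> (shift -` A \<inter> X) = emeasure \<nu> A)"

definition lang :: "(int \<Rightarrow> 'a) set \<Rightarrow> nat \<Rightarrow> 'a list set" where
  "lang X n = {u. length u = n \<and> (\<exists>x\<in>X. \<forall>i<n. x (int i) = u ! i)}"

definition cyl :: "(int \<Rightarrow> 'a) set \<Rightarrow> 'a list \<Rightarrow> (int \<Rightarrow> 'a) set" where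
  "cyl X u = {x\<in>X. \<forall>i<length u. x (int i) = u ! i}"

definition boshernitzan :: "(int \<Rightarrow> 'a::finite) set \<Rightarrow> bool" where
  "boshernitzan X \<longleftrightarrow> (\<exists>\<nu>. invariant_prob X \<nu> \<and>
     limsup (\<lambda>n. ereal (real n * Min ((\<lambda>u. measure \<nu> (cyl X u)) ` lang X n))) > 0)"

definition L2_eigenvalue :: "(int \<Rightarrow> 'a) measure \<Rightarrow> complex \<Rightarrow> bool" where
  "L2_eigenvalue \<mu> z \<longleftrightarrow> (\<exists>f :: (int \<Rightarrow> 'a) \<Rightarrow> complex.
     f \<in> borel_measurable \<mu> \<and> integrable \<mu> (\<lambda>x. (cmod (f x))\<^sup>2) \<and>
     \<not> (AE x in \<mu>. f x = 0) \<and> (AE x in \<mu>. f (shift x) = z * f x))"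

definition topological_eigenvalue :: "(int \<Rightarrow> 'a) set \<Rightarrow> complex \<Rightarrow> bool" where
  "topological_eigenvalue X z \<longleftrightarrow> (\<exists>f :: (int \<Rightarrow> 'a) \<Rightarrow> complex.
     continuous_map (subtopology shift_top X) euclidean f \<and> (\<exists>x\<in>X. f x \<noteq> 0) \<and>
     (\<forall>x\<in>X. f (shift x) = z * f x))"

end

theory Submission
  imports Defs
begin


lemma topspace_shift_top[simp]: "topspace shift_top = UNIV"
  by (simp add: shift_top_def)

lemma local_open:
  assumes "finite F" and "\<And>x y. x \<in> T \<Longrightarrow> (\<forall>i\<in>F. y i = x i) \<Longrightarrow> y \<in> T"
  shows "openin shift_top T"
  unfolding shift_top_def openin_product_topology_alt
proof
  fix x assume x: "x \<in> T"
  define U where "U = (\<lambda>i. if i \<in> F then {x i} else (UNIV::'a set))"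
  have "{i \<in> UNIV. U i \<noteq> topspace (discrete_topology UNIV)} \<subseteq> F"
    by (auto simp: U_def)
  hence "finite {i \<in> UNIV. U i \<noteq> topspace (discrete_topology UNIV)}"
    using assms(1) finite_subset by blast
  moreover have "x \<in> Pi\<^sub>E UNIV U" by (auto simp: PiE_UNIV_domain U_def)
  moreover have "Pi\<^sub>E UNIV U \<subseteq> T"
  proof
    fix y assume "y \<in> Pi\<^sub>E UNIV U"
    hence "\<forall>i\<in>F. y i = x i" by (auto simp: PiE_UNIV_domain U_def Pi_def split: if_splits)
    thus "y \<in> T" using assms(2) x by blast
  qed
  ultimately show "\<exists>U. finite {i \<in> UNIV. U i \<noteq> topspace (discrete_topology UNIV)} \<and>
           (\<forall>i\<in>UNIV. openin (discrete_topology UNIV) (U i)) \<and> x \<in> Pi\<^sub>E UNIV U \<and> Pi\<^sub>E UNIV U \<subseteq> T"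
    by auto
qed

lemma shift_continuous: "continuous_map shift_top shift_top shift"
  unfolding shift_top_def
  by (auto simp: continuous_map_componentwise_UNIV shift_def intro!: continuous_map_product_projection)


lemma openin_sub_X_subset: "openin (subtopology shift_top X) U \<Longrightarrow> U \<subseteq> X"
  using openin_subset by fastforce

lemma sets_borel_X: "sets (borel_X X) = sigma_sets X {U. openin (subtopology shift_top X) U}"
  unfolding borel_X_def by (rule sets_measure_of) (auto dest: openin_sub_X_subset)

lemma space_borel_X: "space (borel_X X) = X"
  unfolding borel_X_def by (rule space_measure_of) (auto dest: openin_sub_X_subset)

lemma local_open_sub:
  assumes "finite F" "C \<subseteq> X" and "\<And>x y. x \<in> C \<Longrightarrow> y \<in> X \<Longrightarrow> (\<forall>i\<in>F. y i = x i) \<Longrightarrow> y \<in> C"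
  shows "openin (subtopology shift_top X) C"
proof -
  define T where "T = {y. \<exists>x\<in>C. \<forall>i\<in>F. y i = x i}"
  have "openin shift_top T"
    by (rule local_open[OF assms(1)]) (auto simp: T_def)
  moreover have "C = T \<inter> X" using assms(2,3) by (auto simp: T_def)
  ultimately show ?thesis by (auto simp: openin_subtopology)
qed

context
  fixes X :: "(int \<Rightarrow> 'a::finite) set" and \<mu> :: "(int \<Rightarrow> 'a) measure"
  assumes inv: "invariant_prob X \<mu>" and sub: "subshift X"
begin

lemma prob: "prob_space \<mu>" using inv by (simp add: invariant_prob_def)
lemma sets_mu: "sets \<mu> = sigma_sets X {U. openin (subtopology shift_top X) U}"
  using inv by (simp add: invariant_prob_def sets_borel_X)
lemma space_mu: "space \<mu> = X" using inv by (simp add: invariant_prob_def)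

lemma open_sets: "openin (subtopology shift_top X) U \<Longrightarrow> U \<in> sets \<mu>"
  by (simp add: sets_mu)

lemma shift_X: "x \<in> X \<Longrightarrow> shift x \<in> X"
proof -
  have "shift ` X = X" using sub by (simp add: subshift_def)
  thus "x \<in> X \<Longrightarrow> shift x \<in> X" by blast
qed

lemma shift_pre_sets: assumes "A \<in> sets \<mu>" shows "shift -` A \<inter> X \<in> sets \<mu>"
proof -
  have im: "shift \<in> topspace (subtopology shift_top X) \<rightarrow> X" using shift_X by auto
  have cm: "continuous_map (subtopology shift_top X) (subtopology shift_top X) shift"
    by (intro continuous_map_into_subtopology continuous_map_from_subtopology shift_continuous im)
  have "shift \<in> measurable (borel_X X) (borel_X X)"
    unfolding borel_X_def
  proof (rule measurable_measure_of)
    show "{U. openin (subtopology shift_top X) U} \<subseteq> Pow X" by (auto dest: openin_sub_X_subset)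
    show "shift \<in> space (sigma X {U. openin (subtopology shift_top X) U}) \<rightarrow> X"
    proof (rule Pi_I)
      fix x assume "x \<in> space (sigma X {U. openin (subtopology shift_top X) U})"
      hence "x \<in> X" by (simp add: space_measure_of_conv)
      thus "shift x \<in> X" by (rule shift_X)
    qed
    fix U assume "U \<in> {U. openin (subtopology shift_top X) U}"
    hence "openin (subtopology shift_top X) {x \<in> topspace (subtopology shift_top X). shift x \<in> U}"
      using cm by (auto simp: continuous_map_def)
    moreover have "{x \<in> topspace (subtopology shift_top X). shift x \<in> U} = shift -` U \<inter> X" by auto
    ultimately have op: "openin (subtopology shift_top X) (shift -` U \<inter> X)" by simp
    show "shift -` U \<inter> space (sigma X {U. openin (subtopology shift_top X) U})
        \<in> sets (sigma X {U. openin (subtopology shift_top X) U})"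
    proof -
      have sb: "{U. openin (subtopology shift_top X) U} \<subseteq> Pow X" by (auto dest: openin_sub_X_subset)
      show ?thesis using op
        by (simp add: sets_measure_of[OF sb] space_measure_of[OF sb] sigma_sets.Basic)
    qed
  qed
  hence "shift \<in> measurable \<mu> \<mu>"
    using inv by (simp add: invariant_prob_def measurable_def space_borel_X)
  thus ?thesis using assms space_mu by (metis measurable_sets)
qed

lemma shift_pre_measure: "A \<in> sets \<mu> \<Longrightarrow> measure \<mu> (shift -` A \<inter> X) = measure \<mu> A"
  using inv by (simp add: invariant_prob_def measure_def)

lemma shiftn_X: "x \<in> X \<Longrightarrow> (shift ^^ k) x \<in> X"
  by (induction k) (auto simp: shift_X)

lemma shiftn_pre: "A \<in> sets \<mu> \<Longrightarrow> (shift ^^ k) -` A \<inter> X \<in> sets \<mu> \<and>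
   measure \<mu> ((shift ^^ k) -` A \<inter> X) = measure \<mu> A"
proof (induction k)
  case 0
  then show ?case using sets.sets_into_space[of A \<mu>] space_mu by auto
next
  case (Suc k)
  have eq: "(shift ^^ Suc k) -` A \<inter> X = shift -` ((shift ^^ k) -` A \<inter> X) \<inter> X"
    by (auto simp: funpow_swap1 shift_X)
  define B where "B = (shift ^^ k) -` A \<inter> X"
  have B: "B \<in> sets \<mu>" "measure \<mu> B = measure \<mu> A" using Suc.IH Suc.prems by (auto simp: B_def)
  show ?case unfolding eq B_def[symmetric] using shift_pre_sets[OF B(1)] shift_pre_measure[OF B(1)] B(2)
    by simp
qed

lemma AE_shift: assumes "AE x in \<mu>. Q x" shows "AE x in \<mu>. Q (shift x)"
proof -
  obtain N where N: "N \<in> null_sets \<mu>" "{x\<in>space \<mu>. \<not> Q x} \<subseteq> N"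
    using assms by (auto simp: eventually_ae_filter)
  have "shift -` N \<inter> X \<in> null_sets \<mu>"
    using N(1) shift_pre_sets inv by (auto simp: null_sets_def invariant_prob_def)
  moreover have "{x\<in>space \<mu>. \<not> Q (shift x)} \<subseteq> shift -` N \<inter> X"
    using N(2) space_mu shift_X by auto
  ultimately show ?thesis by (auto intro: AE_I')
qed

lemma AE_shiftn: assumes "AE x in \<mu>. Q x" shows "AE x in \<mu>. Q ((shift ^^ k) x)"
proof (induction k)
  case 0 then show ?case using assms by simp
next
  case (Suc k)
  from AE_shift[OF this] show ?case by (simp add: funpow_swap1)
qed

end


definition loc :: "(int \<Rightarrow> 'a) set \<Rightarrow> nat \<Rightarrow> (int \<Rightarrow> 'a) set \<Rightarrow> bool" where
  "loc X l C \<longleftrightarrow> C \<subseteq> X \<and> (\<forall>x\<in>C. \<forall>y\<in>X. (\<forall>i. \<bar>i\<bar> \<le> int l \<longrightarrow> y i = x i) \<longrightarrow> y \<in> C)"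

lemma loc_open: "loc X l C \<Longrightarrow> openin (subtopology shift_top X) C"
proof -
  assume "loc X l C"
  then show ?thesis unfolding loc_def
    by (intro local_open_sub[where F="{-int l..int l}"]) (auto simp: abs_le_iff)
qed

lemma loc_mono: "loc X l C \<Longrightarrow> l \<le> l' \<Longrightarrow> loc X l' C"
  unfolding loc_def by force

lemma loc_UN: "finite I \<Longrightarrow> (\<And>i. i \<in> I \<Longrightarrow> loc X l (C i)) \<Longrightarrow> loc X l (\<Union>i\<in>I. C i)"
  unfolding loc_def by blast

lemma loc_compl: "loc X l C \<Longrightarrow> loc X l (X - C)"
  unfolding loc_def by (metis (no_types, lifting) Diff_iff Diff_subset)

lemma loc_empty: "loc X l {}" by (simp add: loc_def)

lemma open_nbhd:
  assumes "openin shift_top T" "x \<in> T"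
  shows "\<exists>l. \<forall>y. (\<forall>i. \<bar>i\<bar> \<le> int l \<longrightarrow> y i = x i) \<longrightarrow> y \<in> T"
proof -
  obtain V where V: "finite {i \<in> UNIV. V i \<noteq> topspace (discrete_topology (UNIV::'a set))}"
     "x \<in> Pi\<^sub>E UNIV V" "Pi\<^sub>E UNIV V \<subseteq> T"
    using assms unfolding shift_top_def openin_product_topology_alt by blast
  define F where "F = {i. V i \<noteq> (UNIV::'a set)}"
  have fF: "finite F" using V(1) by (simp add: F_def)
  define l where "l = nat (Max (insert 0 (abs ` F)))"
  have bound: "\<bar>i\<bar> \<le> int l" if "i \<in> F" for i
  proof -
    have "\<bar>i\<bar> \<le> Max (insert 0 (abs ` F))" using fF that by (intro Max_ge) auto
    moreover have "0 \<le> Max (insert 0 (abs ` F))" using fF by (intro Max_ge) auto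
    ultimately show ?thesis by (simp add: l_def)
  qed
  have "y \<in> T" if "\<forall>i. \<bar>i\<bar> \<le> int l \<longrightarrow> y i = x i" for y
  proof -
    have "y \<in> Pi\<^sub>E UNIV V"
    proof (unfold PiE_UNIV_domain, rule Pi_I)
      fix i :: int
      show "y i \<in> V i"
      proof (cases "i \<in> F")
        case True
        then have "y i = x i" using that bound by blast
        then show ?thesis using V(2) by (auto simp: PiE_UNIV_domain)
      next
        case False then show ?thesis by (auto simp: F_def)
      qed
    qed
    then show ?thesis using V(3) by blast
  qed
  then show ?thesis by blast
qed

definition apxset :: "(int \<Rightarrow> 'a) set \<Rightarrow> (int \<Rightarrow> 'a) measure \<Rightarrow> (int \<Rightarrow> 'a) set \<Rightarrow> bool" where
  "apxset X \<mu> E \<longleftrightarrow> (\<forall>e>0. \<exists>l C. loc X l C \<and> measure \<mu> ((E - C) \<union> (C - E)) < e)"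

context
  fixes X :: "(int \<Rightarrow> 'a::finite) set" and \<mu> :: "(int \<Rightarrow> 'a) measure"
  assumes inv: "invariant_prob X \<mu>" and sub: "subshift X"
begin

lemma loc_sets: "loc X l C \<Longrightarrow> C \<in> sets \<mu>"
  using open_sets[OF inv sub] loc_open by blast

lemma apxset_open:
  assumes U: "openin (subtopology shift_top X) U"
  shows "apxset X \<mu> U"
  unfolding apxset_def
proof (intro allI impI)
  fix e :: real assume e: "e > 0"
  interpret prob_space \<mu> by (rule prob[OF inv sub])
  define W where "W l = {x \<in> X. \<forall>y\<in>X. (\<forall>i. \<bar>i\<bar> \<le> int l \<longrightarrow> y i = x i) \<longrightarrow> y \<in> U}" for l
  have locW: "loc X l (W l)" for l unfolding loc_def W_def by auto
  have WU: "W l \<subseteq> U" for l unfolding W_def by auto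
  have incW: "incseq W" unfolding incseq_def W_def by force
  have UW: "(\<Union>l. W l) = U"
  proof
    show "(\<Union>l. W l) \<subseteq> U" using WU by blast
    show "U \<subseteq> (\<Union>l. W l)"
    proof
      fix x assume x: "x \<in> U"
      obtain T where T: "openin shift_top T" "U = T \<inter> X" using U by (auto simp: openin_subtopology)
      obtain l where l: "\<forall>y. (\<forall>i. \<bar>i\<bar> \<le> int l \<longrightarrow> y i = x i) \<longrightarrow> y \<in> T"
        using open_nbhd[OF T(1)] x T(2) by blast
      have "x \<in> W l" using l x T(2) by (auto simp: W_def)
      then show "x \<in> (\<Union>l. W l)" by blast
    qed
  qed
  have Wsets: "range W \<subseteq> sets \<mu>" using loc_sets locW by blast
  have "(\<lambda>l. measure \<mu> (W l)) \<longlonglongrightarrow> measure \<mu> (\<Union>l. W l)"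
    by (rule finite_Lim_measure_incseq[OF Wsets incW])
  then obtain no where no: "\<forall>n\<ge>no. norm (measure \<mu> (W n) - measure \<mu> U) < e"
    using LIMSEQ_D[OF _ e] UW by metis
  have Us: "U \<in> sets \<mu>" using open_sets[OF inv sub U] .
  have "(U - W no) \<union> (W no - U) = U - W no" using WU by blast
  moreover have "measure \<mu> (U - W no) = measure \<mu> U - measure \<mu> (W no)"
    using finite_measure_Diff[OF Us] Wsets WU by blast
  ultimately have "measure \<mu> ((U - W no) \<union> (W no - U)) < e" using no by auto
  then show "\<exists>l C. loc X l C \<and> measure \<mu> ((U - C) \<union> (C - U)) < e" using locW by blast
qed

lemma apxset_all:
  assumes "E \<in> sets \<mu>" shows "apxset X \<mu> E"
proof -
  interpret prob_space \<mu> by (rule prob[OF inv sub])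
  have "E \<in> sigma_sets X {U. openin (subtopology shift_top X) U}" using assms sets_mu[OF inv sub] by simp
  then have "E \<in> sets \<mu> \<and> apxset X \<mu> E"
  proof (induction rule: sigma_sets.induct)
    case (Basic a)
    then show ?case using apxset_open open_sets[OF inv sub] by auto
  next
    case Empty
    then show ?case unfolding apxset_def using loc_empty by force
  next
    case (Compl a)
    have as: "X - a \<in> sets \<mu>" using Compl space_mu[OF inv sub] by (metis sets.compl_sets)
    have aX: "a \<subseteq> X" using Compl sets.sets_into_space space_mu[OF inv sub] by blast
    have "apxset X \<mu> (X - a)"
      unfolding apxset_def
    proof (intro allI impI)
      fix e :: real assume "e > 0"
      then obtain l C where lC: "loc X l C" "measure \<mu> ((a - C) \<union> (C - a)) < e"
        using Compl unfolding apxset_def by blast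
      have CX: "C \<subseteq> X" using lC(1) by (simp add: loc_def)
      have "((X - a) - (X - C)) \<union> ((X - C) - (X - a)) = (a - C) \<union> (C - a)" using aX CX by blast
      then show "\<exists>l C. loc X l C \<and> measure \<mu> (((X - a) - C) \<union> (C - (X - a))) < e"
        using lC loc_compl by metis
    qed
    then show ?case using as by blast
  next
    case (Union a)
    have as: "\<And>i. a i \<in> sets \<mu>" using Union by blast
    have Es: "(\<Union>i. a i) \<in> sets \<mu>" using as by blast
    have "apxset X \<mu> (\<Union>i. a i)"
      unfolding apxset_def
    proof (intro allI impI)
      fix e :: real assume e: "e > 0"
      define A where "A K = (\<Union>i<K. a i)" for K
      have As: "range A \<subseteq> sets \<mu>" using as by (auto simp: A_def)
      have incA: "incseq A" unfolding incseq_def A_def by force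
      have UA: "(\<Union>K. A K) = (\<Union>i. a i)" by (auto simp: A_def)
      have "(\<lambda>K. measure \<mu> (A K)) \<longlonglongrightarrow> measure \<mu> (\<Union>K. A K)"
        by (rule finite_Lim_measure_incseq[OF As incA])
      then obtain no where no: "\<forall>n\<ge>no. norm (measure \<mu> (A n) - measure \<mu> (\<Union>i. a i)) < e/2"
        using LIMSEQ_D[of _ _ "e/2"] e UA by (metis half_gt_zero)
      define K where "K = Suc no"
      have K0: "real K > 0" by (simp add: K_def)
      have "\<forall>i. \<exists>p. loc X (fst p) (snd p) \<and> measure \<mu> ((a i - snd p) \<union> (snd p - a i)) < e / (2 * K)"
      proof
        fix i
        have "e / (2 * K) > 0" using e K0 by simp
        then obtain l C where "loc X l C" "measure \<mu> ((a i - C) \<union> (C - a i)) < e / (2 * K)"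
          using Union.IH[of i] unfolding apxset_def by blast
        then show "\<exists>p. loc X (fst p) (snd p) \<and> measure \<mu> ((a i - snd p) \<union> (snd p - a i)) < e / (2 * K)"
          by (intro exI[of _ "(l, C)"]) simp
      qed
      then obtain p where p: "\<And>i. loc X (fst (p i)) (snd (p i))"
        "\<And>i. measure \<mu> ((a i - snd (p i)) \<union> (snd (p i) - a i)) < e / (2 * K)"
        by metis
      define L where "L = Max ((\<lambda>i. fst (p i)) ` {..<K})"
      define C where "C = (\<Union>i<K. snd (p i))"
      have locC: "loc X L C" unfolding C_def
        by (rule loc_UN) (auto intro: loc_mono[OF p(1)] simp: L_def)
      have Cs: "\<And>i. snd (p i) \<in> sets \<mu>" using loc_sets p(1) by blast
      define D where "D i = (a i - snd (p i)) \<union> (snd (p i) - a i)" for i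
      have Ds: "\<And>i. D i \<in> sets \<mu>" using as Cs by (auto simp: D_def)
      have sub1: "((\<Union>i. a i) - C) \<union> (C - (\<Union>i. a i)) \<subseteq> ((\<Union>i. a i) - A K) \<union> (\<Union>i<K. D i)"
        by (auto simp: A_def C_def D_def)
      have "measure \<mu> (((\<Union>i. a i) - C) \<union> (C - (\<Union>i. a i))) \<le>
            measure \<mu> (((\<Union>i. a i) - A K) \<union> (\<Union>i<K. D i))"
        by (rule finite_measure_mono[OF sub1]) (use Es As Ds in auto)
      also have "\<dots> \<le> measure \<mu> ((\<Union>i. a i) - A K) + measure \<mu> (\<Union>i<K. D i)"
        by (rule measure_Un_le) (use Es As Ds in auto)
      also have "measure \<mu> ((\<Union>i. a i) - A K) = measure \<mu> (\<Union>i. a i) - measure \<mu> (A K)"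
        by (rule finite_measure_Diff) (use Es As in \<open>auto simp: A_def\<close>)
      also have "\<dots> < e / 2" using no[rule_format, of K] by (auto simp: K_def abs_if split: if_splits)
      also have "measure \<mu> (\<Union>i<K. D i) \<le> (\<Sum>i<K. measure \<mu> (D i))"
        by (rule measure_UNION_le) (use Ds in auto)
      also have "\<dots> \<le> (\<Sum>i<K. e / (2 * K))"
        by (rule sum_mono) (use p(2) in \<open>auto simp: D_def less_imp_le\<close>)
      also have "\<dots> = e / 2" using K0 by simp
      finally have "measure \<mu> (((\<Union>i. a i) - C) \<union> (C - (\<Union>i. a i))) < e" by simp
      then show "\<exists>l C. loc X l C \<and> measure \<mu> (((\<Union>i. a i) - C) \<union> (C - (\<Union>i. a i))) < e"
        using locC by blast
    qed
    then show ?case using Es by blast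
  qed
  then show ?thesis by blast
qed

end


lemma shiftn_apply: "(shift ^^ k) x i = x (i + int k)"
  by (induction k arbitrary: i) (simp_all add: shift_def algebra_simps)

lemma discrete_ivt:
  fixes g :: "nat \<Rightarrow> nat"
  assumes step: "\<And>j. g (Suc j) \<le> g j + 1" and "g 0 \<le> v" "v \<le> g k"
  shows "\<exists>j\<le>k. g j = v"
  using assms(3)
proof (induction k)
  case 0 then show ?case using assms(2) by auto
next
  case (Suc k)
  show ?case
  proof (cases "v \<le> g k")
    case True then show ?thesis using Suc.IH by (meson le_Suc_eq)
  next
    case False then have "v = g (Suc k)" using Suc.prems step[of k] by linarith
    then show ?thesis by blast
  qed
qed

lemma local_open_fin:
  assumes "\<And>x y. x \<in> X \<Longrightarrow> y \<in> X \<Longrightarrow> (\<forall>j<N. y (int j) = x (int j)) \<Longrightarrow> G y = G x"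
  shows "continuous_map (subtopology shift_top X) euclidean G"
  unfolding continuous_map_def
proof (intro conjI allI impI)
  show "G \<in> topspace (subtopology shift_top X) \<rightarrow> topspace euclidean" by simp
  fix U :: "'b set" assume "openin euclidean U"
  show "openin (subtopology shift_top X) {x \<in> topspace (subtopology shift_top X). G x \<in> U}"
  proof (rule local_open_sub[where F="int ` {..<N}"])
    show "{x \<in> topspace (subtopology shift_top X). G x \<in> U} \<subseteq> X" by auto
    fix x y assume "x \<in> {x \<in> topspace (subtopology shift_top X). G x \<in> U}" "y \<in> X"
      "\<forall>i\<in>int ` {..<N}. y i = x i"
    then show "y \<in> {x \<in> topspace (subtopology shift_top X). G x \<in> U}"
      using assms[of x y] by auto
  qed simp
qed

lemma minimal_orbit:
  assumes min: "minimal_subshift X" and x0: "x0 \<in> X" and y1: "y1 \<in> X"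
  shows "\<exists>k. \<forall>j<N. (shift ^^ k) x0 (int j) = y1 (int j)"
proof -
  have sub: "subshift X" using min by (simp add: minimal_subshift_def)
  have sX: "\<And>x. x \<in> X \<Longrightarrow> shift x \<in> X"
  proof -
    have "shift ` X = X" using sub by (simp add: subshift_def)
    thus "\<And>x. x \<in> X \<Longrightarrow> shift x \<in> X" by blast
  qed
  have snX: "(shift ^^ k) x0 \<in> X" for k by (induction k) (auto simp: x0 sX)
  define Orb where "Orb = range (\<lambda>k. (shift ^^ k) x0)"
  define Y where "Y = shift_top closure_of Orb"
  have "Y \<subseteq> X" unfolding Y_def
    by (rule closure_of_minimal) (use snX sub in \<open>auto simp: Orb_def subshift_def\<close>)
  moreover have "Y \<noteq> {}" using closure_of_subset[of Orb shift_top] by (auto simp: Y_def Orb_def)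
  moreover have "closedin shift_top Y" by (simp add: Y_def)
  moreover have "shift ` Y \<subseteq> Y"
  proof -
    have "shift ` Y \<subseteq> shift_top closure_of (shift ` Orb)"
      unfolding Y_def by (rule continuous_map_image_closure_subset[OF shift_continuous])
    also have "\<dots> \<subseteq> Y" unfolding Y_def
    proof (rule closure_of_mono)
      show "shift ` Orb \<subseteq> Orb"
      proof
        fix y assume "y \<in> shift ` Orb"
        then obtain k where "y = shift ((shift ^^ k) x0)" by (auto simp: Orb_def)
        then have "y = (shift ^^ Suc k) x0" by simp
        then show "y \<in> Orb" unfolding Orb_def by (rule range_eqI)
      qed
    qed
    finally show ?thesis .
  qed
  ultimately have "Y = X" using min by (simp add: minimal_subshift_def)
  define U where "U = {y. \<forall>j<N. y (int j) = y1 (int j)}"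
  have "openin shift_top U"
    by (rule local_open[where F="int ` {..<N}"]) (auto simp: U_def)
  moreover have "y1 \<in> U \<inter> Y" using y1 \<open>Y = X\<close> by (simp add: U_def)
  ultimately have "U \<inter> Orb \<noteq> {}" using openin_Int_closure_of_eq_empty[of shift_top U Orb]
    by (auto simp: Y_def)
  then show ?thesis by (auto simp: U_def Orb_def)
qed


context
  fixes X :: "(int \<Rightarrow> 'a::finite) set" and \<mu> :: "(int \<Rightarrow> 'a) measure"
  assumes inv: "invariant_prob X \<mu>" and sub: "subshift X"
begin

lemma local_sets:
  assumes "finite F" "C \<subseteq> X" "\<And>x y. x \<in> C \<Longrightarrow> y \<in> X \<Longrightarrow> (\<forall>i\<in>F. y i = x i) \<Longrightarrow> y \<in> C"
  shows "C \<in> sets \<mu>"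
  by (rule open_sets[OF inv sub, OF local_open_sub[OF assms]])

lemma cyl_sets: "cyl X w \<in> sets \<mu>"
proof (rule local_sets[where F="int ` {..<length w}"])
  show "cyl X w \<subseteq> X" by (auto simp: cyl_def)
  fix x y assume "x \<in> cyl X w" "y \<in> X" and h: "\<forall>i\<in>int ` {..<length w}. y i = x i"
  then show "y \<in> cyl X w" unfolding cyl_def by force
qed simp

lemma core:
  fixes \<Lambda> :: "complex set" and z :: complex and R P :: "(int \<Rightarrow> 'a) \<Rightarrow> complex"
    and \<delta> \<epsilon> :: real and l :: nat
  assumes min: "minimal_subshift X"
    and finL: "finite \<Lambda>" and z0: "z \<noteq> 0"
    and zmul: "\<And>w. w \<in> \<Lambda> \<Longrightarrow> z * w \<in> \<Lambda>"
    and zdiv: "\<And>w. w \<in> \<Lambda> \<Longrightarrow> w / z \<in> \<Lambda>"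
    and RL: "\<And>x. R x \<in> \<Lambda>"
    and Rmeas: "\<And>c. {x \<in> X. R x = c} \<in> sets \<mu>"
    and Req: "AE x in \<mu>. R (shift x) = z * R x"
    and Rnz: "8 * \<epsilon> \<le> measure \<mu> {x \<in> X. R x \<noteq> 0}"
    and dpos: "\<delta> > 0" and de: "40 * \<epsilon> \<le> \<delta>"
    and good: "\<And>K. \<exists>N\<ge>K. \<forall>w\<in>lang X N. \<delta> / N \<le> measure \<mu> (cyl X w)"
    and Ploc: "\<And>x y. x \<in> X \<Longrightarrow> y \<in> X \<Longrightarrow> (\<forall>i. \<bar>i\<bar> \<le> int l \<longrightarrow> y i = x i) \<Longrightarrow> P y = P x"
    and Perr: "measure \<mu> {x \<in> X. P x \<noteq> R x} < \<epsilon>"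
  shows "\<exists>G. continuous_map (subtopology shift_top X) euclidean G \<and> (\<exists>x\<in>X. G x \<noteq> 0) \<and>
            (\<forall>x\<in>X. G (shift x) = z * G x)"
proof -
  interpret prob_space \<mu> by (rule prob[OF inv sub])
  have spX: "space \<mu> = X" by (rule space_mu[OF inv sub])
  have sX: "\<And>x. x \<in> X \<Longrightarrow> shift x \<in> X" by (rule shift_X[OF inv sub])
  have snX: "\<And>x k. x \<in> X \<Longrightarrow> (shift ^^ k) x \<in> X" by (rule shiftn_X[OF inv sub])
  have Reqn: "AE x in \<mu>. R ((shift ^^ k) x) = z ^ k * R x" for k
  proof (induction k)
    case 0 then show ?case by simp
  next
    case (Suc k)
    have "AE x in \<mu>. R (shift ((shift ^^ k) x)) = z * R ((shift ^^ k) x)"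
      by (rule AE_shiftn[OF inv sub Req])
    with Suc show ?case
    proof eventually_elim
      case (elim x)
      have "R ((shift ^^ Suc k) x) = R (shift ((shift ^^ k) x))" by simp
      also have "\<dots> = z * R ((shift ^^ k) x)" using elim by blast
      also have "\<dots> = z * (z ^ k * R x)" using elim by simp
      finally show ?case by simp
    qed
  qed
  define m where "m = 2 * l + 1"
  obtain N where N: "N \<ge> 2 * m + 16" and goodN: "\<forall>w\<in>lang X N. \<delta> / N \<le> measure \<mu> (cyl X w)"
    using good by blast
  define n where "n = N - m"
  have n_pos: "n > 0" using N by (simp add: n_def)
  define cnt where "cnt c x = card {k. k < n \<and> P ((shift ^^ (k + l)) x) = z ^ (k + l) * c}" for c x
  define M where "M x = Max ((\<lambda>c. cnt c x) ` \<Lambda>)" for x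
  have LnE: "\<Lambda> \<noteq> {}" using RL by blast
  have cnt_le_M: "cnt c x \<le> M x" if "c \<in> \<Lambda>" for c x
    unfolding M_def using finL that by (intro Max_ge) auto
  have M_attain: "\<exists>c\<in>\<Lambda>. cnt c x = M x" for x
  proof -
    have "Max ((\<lambda>c. cnt c x) ` \<Lambda>) \<in> (\<lambda>c. cnt c x) ` \<Lambda>" using finL LnE by (intro Max_in) auto
    then show ?thesis unfolding M_def by auto
  qed
  have cnt_loc: "cnt c y = cnt c x" if "x \<in> X" "y \<in> X" "\<forall>j<N. y (int j) = x (int j)" for c x y
  proof -
    have "P ((shift ^^ (k + l)) y) = P ((shift ^^ (k + l)) x)" if "k < n" for k
    proof (rule Ploc)
      show "(shift ^^ (k + l)) x \<in> X" "(shift ^^ (k + l)) y \<in> X" using snX \<open>x \<in> X\<close> \<open>y \<in> X\<close> by auto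
      show "\<forall>i. \<bar>i\<bar> \<le> int l \<longrightarrow> (shift ^^ (k + l)) y i = (shift ^^ (k + l)) x i"
      proof (intro allI impI)
        fix i :: int assume "\<bar>i\<bar> \<le> int l"
        then have "i + int (k + l) = int (nat (i + int (k + l)))" "nat (i + int (k + l)) < N"
          using \<open>k < n\<close> by (auto simp: n_def m_def)
        then show "(shift ^^ (k + l)) y i = (shift ^^ (k + l)) x i"
          unfolding shiftn_apply using \<open>\<forall>j<N. y (int j) = x (int j)\<close> by metis
      qed
    qed
    then show ?thesis unfolding cnt_def by (metis (no_types, lifting))
  qed
  have M_loc: "M y = M x" if "x \<in> X" "y \<in> X" "\<forall>j<N. y (int j) = x (int j)" for x y
    unfolding M_def using cnt_loc[OF that] by simp
  have cnt_shift: "cnt (z * c) (shift x) \<le> cnt c x + 1 \<and> cnt c x \<le> cnt (z * c) (shift x) + 1" for c x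
  proof -
    define A where "A = {k. k < n \<and> P ((shift ^^ (k + l)) x) = z ^ (k + l) * c}"
    define A' where "A' = {k. k < n \<and> P ((shift ^^ (k + l)) (shift x)) = z ^ (k + l) * (z * c)}"
    have eqA': "A' = {k. k < n \<and> P ((shift ^^ (Suc k + l)) x) = z ^ (Suc k + l) * c}"
      unfolding A'_def by (simp add: funpow_Suc_right[symmetric] funpow_swap1 mult_ac)
    have fA: "finite A" "finite A'" by (auto simp: A_def A'_def)
    have "Suc ` A' \<subseteq> insert n A" unfolding eqA' A_def by auto
    have "card A' = card (Suc ` A')" by (simp add: card_image)
    also have "\<dots> \<le> card (insert n A)" using fA \<open>Suc ` A' \<subseteq> insert n A\<close> by (intro card_mono) auto
    also have "\<dots> \<le> card A + 1" using fA by (simp add: card_insert_if)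
    finally have 1: "card A' \<le> card A + 1" .
    have "A \<subseteq> insert 0 (Suc ` A')"
    proof
      fix k assume "k \<in> A"
      show "k \<in> insert 0 (Suc ` A')"
      proof (cases k)
        case (Suc k') then show ?thesis using \<open>k \<in> A\<close> unfolding eqA' A_def by auto
      qed simp
    qed
    then have "card A \<le> card (insert 0 (Suc ` A'))" using fA by (intro card_mono) auto
    also have "\<dots> \<le> card (Suc ` A') + 1" by (simp add: card_insert_le_m1 card_insert_if)
    also have "\<dots> = card A' + 1" by (simp add: card_image)
    finally have 2: "card A \<le> card A' + 1" .
    show ?thesis using 1 2 unfolding cnt_def A_def[symmetric] A'_def[symmetric] by simp
  qed
  have M_step: "M (shift x) \<le> M x + 1" for x
  proof -
    obtain c where c: "c \<in> \<Lambda>" "cnt c (shift x) = M (shift x)" using M_attain by blast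
    have "c / z \<in> \<Lambda>" using zdiv c(1) .
    moreover have "z * (c / z) = c" using z0 by simp
    ultimately show ?thesis using cnt_shift[of "c / z" x] cnt_le_M[of "c / z" x] c(2) by fastforce
  qed
  have M_step2: "M x \<le> M (shift x) + 1" for x
  proof -
    obtain c where c: "c \<in> \<Lambda>" "cnt c x = M x" using M_attain by blast
    show ?thesis using cnt_shift[of c x] cnt_le_M[OF zmul[OF c(1)], of "shift x"] c(2) by linarith
  qed
  have two: "cnt c x + cnt c' x \<le> n" if "c \<noteq> c'" for c c' x
  proof -
    have "{k. k < n \<and> P ((shift ^^ (k + l)) x) = z ^ (k + l) * c} \<inter>
          {k. k < n \<and> P ((shift ^^ (k + l)) x) = z ^ (k + l) * c'} = {}"
      using that z0 by auto
    then have "cnt c x + cnt c' x = card ({k. k < n \<and> P ((shift ^^ (k + l)) x) = z ^ (k + l) * c} \<union>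
          {k. k < n \<and> P ((shift ^^ (k + l)) x) = z ^ (k + l) * c'})"
      unfolding cnt_def by (intro card_Un_disjoint[symmetric]) auto
    also have "\<dots> \<le> card {..<n}" by (intro card_mono) auto
    finally show ?thesis by simp
  qed
  have eps_pos: "\<epsilon> > 0" using Perr measure_nonneg[of \<mu> "{x \<in> X. P x \<noteq> R x}"] by linarith
  define E0 where "E0 = {x \<in> X. P x \<noteq> R x}"
  have Pne_sets: "{x \<in> X. P x \<noteq> c} \<in> sets \<mu>" for c
  proof (rule local_sets[where F="{-int l..int l}"])
    fix x y assume "x \<in> {x \<in> X. P x \<noteq> c}" "y \<in> X" "\<forall>i\<in>{- int l..int l}. y i = x i"
    then have "P y = P x" by (intro Ploc) (auto simp: abs_le_iff)
    then show "y \<in> {x \<in> X. P x \<noteq> c}" using \<open>x \<in> {x \<in> X. P x \<noteq> c}\<close> \<open>y \<in> X\<close> by simp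
  qed auto
  have E0_eq: "E0 = (\<Union>c\<in>\<Lambda>. {x \<in> X. R x = c} \<inter> {x \<in> X. P x \<noteq> c})"
    using RL by (auto simp: E0_def)
  have E0s: "E0 \<in> sets \<mu>" unfolding E0_eq using finL Rmeas Pne_sets by blast
  define B where "B k = (shift ^^ (k + l)) -` E0 \<inter> X" for k
  have Bs: "B k \<in> sets \<mu>" and Bm: "measure \<mu> (B k) = measure \<mu> E0" for k
    using shiftn_pre[OF inv sub E0s] by (auto simp: B_def)
  define f where "f x = (\<Sum>k<n. indicator (B k) x :: real)" for x
  have intB: "integrable \<mu> (indicator (B k) :: _ \<Rightarrow> real)" for k
    by (rule integrable_real_indicator[OF Bs]) (simp add: less_top[symmetric] emeasure_finite)
  have intf: "integrable \<mu> f" unfolding f_def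
    by (rule Bochner_Integration.integrable_sum) (rule intB)
  have intf_eq: "(\<integral>x. f x \<partial>\<mu>) = n * measure \<mu> E0"
  proof -
    have "(\<integral>x. f x \<partial>\<mu>) = (\<Sum>k<n. (\<integral>x. indicator (B k) x \<partial>\<mu>))" unfolding f_def
      by (rule Bochner_Integration.integral_sum) (rule intB)
    also have "\<dots> = (\<Sum>k<n. measure \<mu> E0)"
      using Bm sets.sets_into_space[OF Bs] by (simp add: Int_absorb2)
    finally show ?thesis by simp
  qed
  have n4: "(0::real) < real n / 4" using n_pos by simp
  have markov: "measure \<mu> {x \<in> space \<mu>. real n / 4 \<le> f x} \<le> (\<integral>x. f x \<partial>\<mu>) / (real n / 4)"
    by (rule integral_Markov_inequality_measure[OF intf sets.top _ n4]) (simp add: f_def sum_nonneg)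
  have markov2: "measure \<mu> {x \<in> space \<mu>. real n / 4 \<le> f x} \<le> 4 * measure \<mu> E0"
    using markov n_pos unfolding intf_eq by (simp add: field_simps)
  define Bad where "Bad = {x \<in> X. 4 * cnt (R x) x \<le> 3 * n}"
  have cnt_sets: "{x \<in> X. 4 * cnt c x \<le> 3 * n} \<in> sets \<mu>" for c
  proof (rule local_sets[where F="int ` {..<N}"])
    fix x y assume "x \<in> {x \<in> X. 4 * cnt c x \<le> 3 * n}" "y \<in> X" "\<forall>i\<in>int ` {..<N}. y i = x i"
    then have "cnt c y = cnt c x" by (intro cnt_loc) auto
    then show "y \<in> {x \<in> X. 4 * cnt c x \<le> 3 * n}" using \<open>x \<in> {x \<in> X. 4 * cnt c x \<le> 3 * n}\<close> \<open>y \<in> X\<close> by simp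
  qed auto
  have Bad_eq: "Bad = (\<Union>c\<in>\<Lambda>. {x \<in> X. R x = c} \<inter> {x \<in> X. 4 * cnt c x \<le> 3 * n})"
    using RL by (auto simp: Bad_def)
  have Bads: "Bad \<in> sets \<mu>" unfolding Bad_eq using finL Rmeas cnt_sets by blast
  have AEall: "AE x in \<mu>. \<forall>k\<in>{..<n}. R ((shift ^^ (k + l)) x) = z ^ (k + l) * R x"
    by (rule AE_finite_allI) (auto intro: Reqn)
  have "AE x in \<mu>. x \<in> Bad \<longrightarrow> x \<in> {x \<in> space \<mu>. real n / 4 \<le> f x}"
    using AEall
  proof eventually_elim
    case (elim x)
    show ?case
    proof
      assume xB: "x \<in> Bad"
      then have xX: "x \<in> X" by (simp add: Bad_def)
      define S where "S = {k. x \<in> B k}"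
      have fx: "f x = card ({..<n} \<inter> S)"
      proof -
        have "f x = (\<Sum>k\<in>{..<n}. indicator S k)" unfolding f_def S_def by (simp add: indicator_def)
        also have "\<dots> = card ({..<n} \<inter> S)" by (simp add: indicator_def sum.If_cases Int_def)
        finally show ?thesis .
      qed
      have cx: "cnt (R x) x = card ({..<n} - S)"
      proof -
        have "{k. k < n \<and> P ((shift ^^ (k + l)) x) = z ^ (k + l) * R x} = {..<n} - S"
        proof (intro set_eqI iffI)
          fix k assume "k \<in> {k. k < n \<and> P ((shift ^^ (k + l)) x) = z ^ (k + l) * R x}"
          then show "k \<in> {..<n} - S" using elim xX by (auto simp: S_def B_def E0_def)
        next
          fix k assume "k \<in> {..<n} - S"
          then show "k \<in> {k. k < n \<and> P ((shift ^^ (k + l)) x) = z ^ (k + l) * R x}"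
            using elim xX snX[OF xX, of "k + l"] by (auto simp: S_def B_def E0_def)
        qed
        then show ?thesis unfolding cnt_def by simp
      qed
      have "card ({..<n} \<inter> S) + card ({..<n} - S) = n"
        using card_Int_Diff[of "{..<n}" S] by simp
      then have "real n / 4 \<le> f x" using xB fx cx by (simp add: Bad_def)
      then show "x \<in> {x \<in> space \<mu>. real n / 4 \<le> f x}" using xX spX by simp
    qed
  qed
  then have "measure \<mu> Bad \<le> measure \<mu> {x \<in> space \<mu>. real n / 4 \<le> f x}"
    by (rule finite_measure_mono_AE) (use intf in \<open>simp\<close>)
  then have Bad_small: "measure \<mu> Bad < 4 * \<epsilon>" using markov2 Perr unfolding E0_def by linarith
  have Rnz_sets: "{x \<in> X. R x \<noteq> 0} \<in> sets \<mu>"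
  proof -
    have "{x \<in> X. R x \<noteq> 0} = X - {x \<in> X. R x = 0}" by auto
    then show ?thesis using Rmeas[of 0] spX by (metis sets.compl_sets)
  qed
  obtain y1 where y1: "y1 \<in> X" "R y1 \<noteq> 0" "\<not> 4 * cnt (R y1) y1 \<le> 3 * n"
  proof -
    have "\<not> {x \<in> X. R x \<noteq> 0} \<subseteq> Bad"
    proof
      assume "{x \<in> X. R x \<noteq> 0} \<subseteq> Bad"
      then have "measure \<mu> {x \<in> X. R x \<noteq> 0} \<le> measure \<mu> Bad" by (rule finite_measure_mono) (rule Bads)
      then show False using Bad_small Rnz eps_pos by linarith
    qed
    then show ?thesis using that by (auto simp: Bad_def)
  qed
  have My1: "3 * n < 4 * M y1" using y1(3) cnt_le_M[OF RL, of y1 y1] by linarith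
  define T where "T = n div 2 + 2"
  have MT: "T \<le> M x" if xX: "x \<in> X" for x
  proof (rule ccontr)
    assume "\<not> T \<le> M x"
    then have Mx: "M x < T" by simp
    obtain k where k: "\<forall>j<N. (shift ^^ k) x (int j) = y1 (int j)"
      using minimal_orbit[OF min xX y1(1)] by blast
    have Mk: "M ((shift ^^ k) x) = M y1" by (rule M_loc[OF y1(1) snX[OF xX]]) (use k in auto)
    define g where "g j = M ((shift ^^ j) x)" for j
    have gstep: "g (Suc j) \<le> g j + 1" for j unfolding g_def using M_step by simp
    define V where "V = {T..(3 * n) div 4}"
    have "\<forall>v\<in>V. \<exists>j. M ((shift ^^ j) x) = v"
    proof
      fix v assume "v \<in> V"
      then have "g 0 \<le> v" "v \<le> g k" using Mx My1 Mk by (auto simp: V_def g_def)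
      then show "\<exists>j. M ((shift ^^ j) x) = v" using discrete_ivt[of g v k, OF gstep] unfolding g_def by blast
    qed
    then obtain J where J: "\<And>v. v \<in> V \<Longrightarrow> M ((shift ^^ J v) x) = v" by metis
    define W where "W v = cyl X (map (\<lambda>i. (shift ^^ J v) x (int i)) [0..<N])" for v
    have WM: "y \<in> X \<and> M y = v" if "v \<in> V" "y \<in> W v" for v y
    proof -
      have yX: "y \<in> X" using that(2) by (simp add: W_def cyl_def)
      have "\<forall>j<N. y (int j) = (shift ^^ J v) x (int j)" using that(2) by (simp add: W_def cyl_def)
      then have "M y = M ((shift ^^ J v) x)" by (intro M_loc snX xX yX)
      then show ?thesis using J[OF that(1)] yX by simp
    qed
    have WBad: "(\<Union>v\<in>V. W v) \<subseteq> Bad"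
    proof
      fix y assume "y \<in> (\<Union>v\<in>V. W v)"
      then obtain v where v: "v \<in> V" "y \<in> W v" by blast
      then have "y \<in> X" "M y = v" using WM by auto
      moreover have "4 * v \<le> 3 * n" using v(1) by (auto simp: V_def)
      ultimately show "y \<in> Bad" using cnt_le_M[OF RL, of y y] by (auto simp: Bad_def)
    qed
    have Wlarge: "\<delta> / N \<le> measure \<mu> (W v)" if "v \<in> V" for v
    proof -
      have "map (\<lambda>i. (shift ^^ J v) x (int i)) [0..<N] \<in> lang X N"
        unfolding lang_def using snX[OF xX] by auto
      then show ?thesis using goodN by (simp add: W_def)
    qed
    have Wdisj: "disjoint_family_on W V"
      unfolding disjoint_family_on_def using WM by blast
    have Ws: "W v \<in> sets \<mu>" for v unfolding W_def by (rule cyl_sets)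
    have "measure \<mu> (\<Union>v\<in>V. W v) = (\<Sum>v\<in>V. measure \<mu> (W v))"
      by (rule finite_measure_finite_Union) (use Wdisj Ws in \<open>auto simp: V_def\<close>)
    also have "\<dots> \<ge> (\<Sum>v\<in>V. \<delta> / N)" by (rule sum_mono) (rule Wlarge)
    finally have "real (card V) * (\<delta> / N) \<le> measure \<mu> (\<Union>v\<in>V. W v)" by simp
    also have "\<dots> \<le> measure \<mu> Bad" by (rule finite_measure_mono[OF WBad Bads])
    finally have upper: "real (card V) * (\<delta> / N) < \<delta> / 10" using Bad_small de by linarith
    have cardV: "card V = Suc ((3 * n) div 4) - T" by (simp add: V_def)
    define a where "a = (3 * n) div 4"
    define b where "b = n div 2"
    have h1: "3 * n \<le> 4 * a + 3" unfolding a_def by linarith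
    have h2: "2 * b \<le> n" unfolding b_def by linarith
    have h3: "n + m = N" using N by (simp add: n_def)
    have "N \<le> 8 * card V" unfolding cardV T_def a_def[symmetric] b_def[symmetric]
      using h1 h2 h3 N by arith
    then have "real N \<le> 8 * real (card V)" by linarith
    moreover have "real N > 0" using N by simp
    ultimately have "\<delta> / 8 \<le> real (card V) * (\<delta> / N)" using dpos
      by (simp add: field_simps)
    then show False using upper dpos by linarith
  qed
  have exists_big: "\<exists>c\<in>\<Lambda>. n < 2 * cnt c x" if "x \<in> X" for x
  proof -
    obtain c where "c \<in> \<Lambda>" "cnt c x = M x" using M_attain by blast
    then show ?thesis using MT[OF that] unfolding T_def by (intro bexI[of _ c]) auto
  qed
  have uniq: "c = c'" if "n < 2 * cnt c x" "n < 2 * cnt c' x" for c c' x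
    using two[of c c' x] that by (cases "c = c'") auto
  define G where "G x = (SOME c. c \<in> \<Lambda> \<and> n < 2 * cnt c x)" for x
  have G: "G x \<in> \<Lambda> \<and> n < 2 * cnt (G x) x" if "x \<in> X" for x
  proof -
    have "\<exists>c. c \<in> \<Lambda> \<and> n < 2 * cnt c x" using exists_big[OF that] by blast
    then show ?thesis unfolding G_def by (rule someI_ex)
  qed
  have G_eq: "G x = c" if "x \<in> X" "n < 2 * cnt c x" for x c
    using uniq G[OF that(1)] that(2) by blast
  have GM: "cnt (G x) x = M x" if "x \<in> X" for x
  proof -
    obtain c where c: "c \<in> \<Lambda>" "cnt c x = M x" using M_attain by blast
    then have "n < 2 * cnt c x" using MT[OF that] unfolding T_def by linarith
    then have "G x = c" by (rule G_eq[OF that])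
    then show ?thesis using c by simp
  qed
  have Tn: "n < 2 * (T - 1)" unfolding T_def by linarith
  have Gshift: "G (shift x) = z * G x" if xX: "x \<in> X" for x
  proof (rule G_eq[OF sX[OF xX]])
    have "cnt (G x) x \<le> cnt (z * G x) (shift x) + 1" using cnt_shift[of "G x" x] by blast
    then have "M x \<le> cnt (z * G x) (shift x) + 1" using GM[OF xX] by linarith
    then have "T - 1 \<le> cnt (z * G x) (shift x)" using MT[OF xX] by linarith
    then show "n < 2 * cnt (z * G x) (shift x)" using Tn by linarith
  qed
  have Gy1: "G y1 = R y1"
  proof (rule G_eq[OF y1(1)])
    show "n < 2 * cnt (R y1) y1" using y1(3) by linarith
  qed
  have Gcont: "continuous_map (subtopology shift_top X) euclidean G"
  proof (rule local_open_fin[where N=N])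
    fix x y assume "x \<in> X" "y \<in> X" "\<forall>j<N. y (int j) = x (int j)"
    then have "\<And>c. cnt c y = cnt c x" by (intro cnt_loc) auto
    then have "(\<lambda>c. c \<in> \<Lambda> \<and> n < 2 * cnt c y) = (\<lambda>c. c \<in> \<Lambda> \<and> n < 2 * cnt c x)" by presburger
    then show "G y = G x" unfolding G_def by metis
  qed
  have "\<exists>x\<in>X. G x \<noteq> 0" using Gy1 y1(1,2) by metis
  then show ?thesis using Gcont Gshift by blast
qed

end




lemma Arg_measurable[measurable]: "Arg \<in> borel_measurable borel"
proof -
  define g where "g z = (if z = 0 then 0 else pi)" for z :: complex
  have eq: "Arg = (\<lambda>z. if z \<in> \<real>\<^sub>\<le>\<^sub>0 then g z else Arg z)"
  proof
    fix z :: complex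
    show "Arg z = (if z \<in> \<real>\<^sub>\<le>\<^sub>0 then g z else Arg z)"
    proof (cases "z \<in> \<real>\<^sub>\<le>\<^sub>0")
      case True
      then obtain r where r: "z = of_real r" "r \<le> 0" by (auto elim!: nonpos_Reals_cases)
      then show ?thesis by (auto simp: g_def Arg_of_real)
    qed simp
  qed
  have gm: "g \<in> borel_measurable borel"
  proof (rule borel_measurable_continuous_countable_exceptions[where X="{0}"])
    have "continuous_on (- {0}) (\<lambda>z::complex. pi)" by (rule continuous_on_const)
    then show "continuous_on (- {0}) g" by (rule continuous_on_cong[THEN iffD1, rotated 2]) (auto simp: g_def)
  qed simp
  have "(\<lambda>z. if z \<in> \<real>\<^sub>\<le>\<^sub>0 then g z else Arg z) \<in> borel_measurable borel"
  proof (subst measurable_If_restrict_space_iff)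
    have "\<real>\<^sub>\<le>\<^sub>0 \<in> sets (borel :: complex measure)" by (rule borel_closed) (rule closed_nonpos_Reals_complex)
    then show "{x \<in> space borel. (x::complex) \<in> \<real>\<^sub>\<le>\<^sub>0} \<in> sets borel" by simp
    have "Arg \<in> borel_measurable (restrict_space borel (- \<real>\<^sub>\<le>\<^sub>0))"
      by (rule borel_measurable_continuous_on_restrict[OF continuous_on_Arg])
    moreover have seq: "{x::complex. x \<notin> \<real>\<^sub>\<le>\<^sub>0} = - \<real>\<^sub>\<le>\<^sub>0" by auto
    ultimately have "Arg \<in> borel_measurable (restrict_space borel {x::complex. x \<notin> \<real>\<^sub>\<le>\<^sub>0})" by simp
    moreover have "g \<in> borel_measurable (restrict_space borel {x::complex. x \<in> \<real>\<^sub>\<le>\<^sub>0})"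
      by (rule measurable_restrict_space1[OF gm])
    ultimately show "g \<in> borel_measurable (restrict_space borel {x::complex. x \<in> \<real>\<^sub>\<le>\<^sub>0}) \<and>
      Arg \<in> borel_measurable (restrict_space borel {x::complex. x \<notin> \<real>\<^sub>\<le>\<^sub>0})" by blast
  qed
  then show ?thesis using eq by simp
qed

definition rnd :: "nat \<Rightarrow> complex \<Rightarrow> complex" where
  "rnd b w = (if w = 0 then 0 else exp (2 * pi * \<i> * of_int \<lfloor>real b * Arg w / (2 * pi)\<rfloor> / of_nat b))"

lemma rnd_measurable[measurable]: "rnd b \<in> borel_measurable borel"
  unfolding rnd_def by measurable

lemma rnd_root: assumes "b > 0" shows "(rnd b w) ^ b = 1 \<or> rnd b w = 0"
proof (cases "w = 0")
  case False
  have "(exp (2 * pi * \<i> * of_int \<lfloor>real b * Arg w / (2 * pi)\<rfloor> / of_nat b)) ^ b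
      = exp (of_nat b * (2 * pi * \<i> * of_int \<lfloor>real b * Arg w / (2 * pi)\<rfloor> / of_nat b))"
    by (simp add: exp_of_nat_mult[symmetric])
  also have "\<dots> = exp (2 * pi * \<i> * of_int \<lfloor>real b * Arg w / (2 * pi)\<rfloor>)"
    using assms by simp
  also have "\<dots> = 1" by (simp add: exp_eq_1)
  finally show ?thesis using False by (simp add: rnd_def)
qed (simp add: rnd_def)

lemma rnd_nz: "w \<noteq> 0 \<Longrightarrow> rnd b w \<noteq> 0" by (simp add: rnd_def)

lemma rnd_eq:
  fixes a :: int and b :: nat
  assumes b: "b > 0" and z: "z = exp (2 * pi * \<i> * complex_of_real (real_of_int a / real b))"
  shows "rnd b (z * w) = z * rnd b w"
proof (cases "w = 0")
  case True then show ?thesis by (simp add: rnd_def)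
next
  case False
  have z0: "z \<noteq> 0" using z by simp
  define t where "t = 2 * pi * (real_of_int a / real b)"
  have zt: "z = exp (\<i> * complex_of_real t)" unfolding z t_def by (simp add: mult_ac)
  have nz: "cmod z = 1" using zt by (simp add: norm_exp_i_times)
  have e1: "z * w = of_real (norm (z * w)) * exp (\<i> * Arg (z * w))" using False z0 by (intro Arg_eq) simp
  have e2: "z * w = of_real (norm (z * w)) * exp (\<i> * (t + Arg w))"
  proof -
    have "z * w = exp (\<i> * t) * (of_real (norm w) * exp (\<i> * Arg w))" using Arg_eq[OF False] zt by simp
    also have "\<dots> = of_real (norm w) * exp (\<i> * (t + Arg w))"
      by (simp add: distrib_left exp_add mult_ac)
    finally show ?thesis using nz by (simp add: norm_mult)
  qed
  have nzw: "complex_of_real (norm (z * w)) \<noteq> 0" using False z0 by simp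
  have "of_real (norm (z * w)) * exp (\<i> * Arg (z * w)) = of_real (norm (z * w)) * exp (\<i> * complex_of_real (t + Arg w))"
    using trans[OF e1[symmetric] e2] by simp
  then have "exp (\<i> * Arg (z * w)) = exp (\<i> * complex_of_real (t + Arg w))"
    using nzw by simp
  then obtain m :: int where m: "\<i> * Arg (z * w) = \<i> * complex_of_real (t + Arg w) + of_int (2 * m) * pi * \<i>"
    unfolding exp_eq by blast
  have Am: "Arg (z * w) = t + Arg w + 2 * pi * m"
  proof -
    have "\<i> * complex_of_real (Arg (z * w)) = \<i> * complex_of_real (t + Arg w + 2 * pi * m)"
      using m by (simp add: algebra_simps)
    then have "complex_of_real (Arg (z * w)) = complex_of_real (t + Arg w + 2 * pi * m)" by simp
    then show ?thesis by (simp only: of_real_eq_iff)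
  qed
  have fl: "\<lfloor>real b * Arg (z * w) / (2 * pi)\<rfloor> = \<lfloor>real b * Arg w / (2 * pi)\<rfloor> + (a + int b * m)"
  proof -
    have "real b * Arg (z * w) / (2 * pi) = real b * Arg w / (2 * pi) + of_int (a + int b * m)"
      using b unfolding Am t_def by (simp add: field_simps)
    then have "\<lfloor>real b * Arg (z * w) / (2 * pi)\<rfloor> = \<lfloor>real b * Arg w / (2 * pi) + of_int (a + int b * m)\<rfloor>"
      by (rule arg_cong)
    also have "\<dots> = \<lfloor>real b * Arg w / (2 * pi)\<rfloor> + (a + int b * m)" by (rule floor_add_int[symmetric])
    finally show ?thesis .
  qed
  define s where "s = \<lfloor>real b * Arg w / (2 * pi)\<rfloor>"
  have "rnd b (z * w) = exp (2 * pi * \<i> * of_int (s + (a + int b * m)) / of_nat b)"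
    using False z0 fl by (simp add: rnd_def s_def)
  also have "\<dots> = exp (2 * pi * \<i> * of_int s / of_nat b) * exp (2 * pi * \<i> * of_int a / of_nat b)
      * exp (2 * pi * \<i> * of_int m)"
  proof -
    have arg: "2 * pi * \<i> * of_int (s + (a + int b * m)) / of_nat b = 2 * pi * \<i> * of_int s / of_nat b
       + 2 * pi * \<i> * of_int a / of_nat b + 2 * pi * \<i> * of_int m"
      using b by (simp add: field_simps)
    show ?thesis by (simp only: arg exp_add)
  qed
  also have "exp (2 * pi * \<i> * of_int m) = 1" by (simp add: exp_eq_1)
  also have "exp (2 * pi * \<i> * of_int a / of_nat b) = z" unfolding z by (simp add: field_simps)
  finally show ?thesis using False by (simp add: rnd_def s_def mult_ac)
qed




context
  fixes X :: "(int \<Rightarrow> 'a::finite) set" and \<mu> :: "(int \<Rightarrow> 'a) measure"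
  assumes inv: "invariant_prob X \<mu>" and sub: "subshift X"
begin

lemma apxset_fun:
  fixes \<Lambda> :: "complex set" and R :: "(int \<Rightarrow> 'a) \<Rightarrow> complex" and e :: real
  assumes finL: "finite \<Lambda>" and RL: "\<And>x. R x \<in> \<Lambda>"
    and Rmeas: "\<And>c. {x \<in> X. R x = c} \<in> sets \<mu>" and e: "e > 0"
  shows "\<exists>l P. (\<forall>x y. x \<in> X \<longrightarrow> y \<in> X \<longrightarrow> (\<forall>i. \<bar>i\<bar> \<le> int l \<longrightarrow> y i = x i) \<longrightarrow> P y = P x) \<and>
     measure \<mu> {x \<in> X. P x \<noteq> R x} < e"
proof -
  interpret prob_space \<mu> by (rule prob[OF inv sub])
  define e' where "e' = e / (real (card \<Lambda>) + 1)"
  have e'pos: "e' > 0" using e by (simp add: e'_def add_pos_nonneg)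
  have "\<forall>c. \<exists>p. loc X (fst p) (snd p) \<and> measure \<mu> (({x \<in> X. R x = c} - snd p) \<union> (snd p - {x \<in> X. R x = c})) < e'"
  proof
    fix c
    obtain l C where "loc X l C" "measure \<mu> (({x \<in> X. R x = c} - C) \<union> (C - {x \<in> X. R x = c})) < e'"
      using apxset_all[OF inv sub Rmeas[of c]] e'pos unfolding apxset_def by blast
    then show "\<exists>p. loc X (fst p) (snd p) \<and> measure \<mu> (({x \<in> X. R x = c} - snd p) \<union> (snd p - {x \<in> X. R x = c})) < e'"
      by (intro exI[of _ "(l, C)"]) simp
  qed
  then have "\<exists>p. \<forall>c. loc X (fst (p c)) (snd (p c)) \<and> measure \<mu> (({x \<in> X. R x = c} - snd (p c)) \<union> (snd (p c) - {x \<in> X. R x = c})) < e'"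
    by (rule choice)
  then obtain p where p: "\<forall>c. loc X (fst (p c)) (snd (p c)) \<and> measure \<mu> (({x \<in> X. R x = c} - snd (p c)) \<union> (snd (p c) - {x \<in> X. R x = c})) < e'"
    by (elim exE)
  have p1: "\<And>c. loc X (fst (p c)) (snd (p c))" using p by blast
  have p2: "\<And>c. measure \<mu> (({x \<in> X. R x = c} - snd (p c)) \<union> (snd (p c) - {x \<in> X. R x = c})) < e'"
    using p by blast
  define C where "C c = snd (p c)" for c
  define L where "L = Max ((\<lambda>c. fst (p c)) ` \<Lambda>)"
  have locC: "loc X L (C c)" if "c \<in> \<Lambda>" for c
    unfolding C_def L_def by (rule loc_mono[OF p1]) (use finL that in auto)
  define P where "P x = (if \<exists>c\<in>\<Lambda>. x \<in> C c then (SOME c. c \<in> \<Lambda> \<and> x \<in> C c) else 0)" for x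
  have Ploc: "P y = P x" if xX: "x \<in> X" and yX: "y \<in> X" and agr: "\<forall>i. \<bar>i\<bar> \<le> int L \<longrightarrow> y i = x i" for x y
  proof -
    have agr': "\<forall>i. \<bar>i\<bar> \<le> int L \<longrightarrow> x i = y i" using agr by simp
    have eqc: "(x \<in> C c) = (y \<in> C c)" if c: "c \<in> \<Lambda>" for c
    proof
      assume "x \<in> C c"
      then show "y \<in> C c" using locC[OF c] yX agr unfolding loc_def by blast
    next
      assume "y \<in> C c"
      then show "x \<in> C c" using locC[OF c] xX agr' unfolding loc_def by blast
    qed
    have e1: "(\<lambda>c. c \<in> \<Lambda> \<and> x \<in> C c) = (\<lambda>c. c \<in> \<Lambda> \<and> y \<in> C c)"
    proof
      fix c show "(c \<in> \<Lambda> \<and> x \<in> C c) = (c \<in> \<Lambda> \<and> y \<in> C c)" using eqc[of c] by blast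
    qed
    have e2: "(\<exists>c\<in>\<Lambda>. x \<in> C c) = (\<exists>c\<in>\<Lambda>. y \<in> C c)" using eqc by blast
    show ?thesis unfolding P_def e1 e2 ..
  qed
  define D where "D c = ({x \<in> X. R x = c} - C c) \<union> (C c - {x \<in> X. R x = c})" for c
  have Ds: "D c \<in> sets \<mu>" if "c \<in> \<Lambda>" for c
    unfolding D_def using Rmeas loc_sets[OF inv sub locC[OF that]] by blast
  have sub1: "{x \<in> X. P x \<noteq> R x} \<subseteq> (\<Union>c\<in>\<Lambda>. D c)"
  proof
    fix x assume x: "x \<in> {x \<in> X. P x \<noteq> R x}"
    show "x \<in> (\<Union>c\<in>\<Lambda>. D c)"
    proof (cases "x \<in> C (R x)")
      case False
      have "x \<in> D (R x)" unfolding D_def using x False by blast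
      then show ?thesis using RL[of x] by blast
    next
      case True
      then have ex: "\<exists>c. c \<in> \<Lambda> \<and> x \<in> C c" using RL[of x] by blast
      have "P x = (SOME c. c \<in> \<Lambda> \<and> x \<in> C c)" using ex by (auto simp: P_def)
      moreover have "(SOME c. c \<in> \<Lambda> \<and> x \<in> C c) \<in> \<Lambda> \<and> x \<in> C (SOME c. c \<in> \<Lambda> \<and> x \<in> C c)"
        using someI_ex[OF ex] .
      ultimately have PL: "P x \<in> \<Lambda>" and PC: "x \<in> C (P x)" by simp_all
      have "P x \<noteq> R x" using x by simp
      then have "x \<notin> {x \<in> X. R x = P x}" by auto
      then have "x \<in> D (P x)" unfolding D_def using PC by (simp only: Un_iff Diff_iff) simp
      then show ?thesis using PL by blast
    qed
  qed
  have "measure \<mu> {x \<in> X. P x \<noteq> R x} \<le> measure \<mu> (\<Union>c\<in>\<Lambda>. D c)"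
    by (rule finite_measure_mono[OF sub1]) (use Ds finL in auto)
  also have "\<dots> \<le> (\<Sum>c\<in>\<Lambda>. measure \<mu> (D c))" by (rule measure_UNION_le[OF finL Ds])
  also have "\<dots> \<le> (\<Sum>c\<in>\<Lambda>. e')" by (rule sum_mono) (use p2 in \<open>auto simp: D_def C_def less_imp_le\<close>)
  also have "\<dots> = real (card \<Lambda>) * e'" by simp
  also have "\<dots> < e" using e by (simp add: e'_def field_simps)
  finally show ?thesis using Ploc by blast
qed

end




lemma lang_finite: "finite (lang X N :: ('a::finite) list set)"
proof (rule finite_subset)
  show "lang X N \<subseteq> {xs. set xs \<subseteq> UNIV \<and> length xs = N}" by (auto simp: lang_def)
  show "finite {xs :: 'a list. set xs \<subseteq> UNIV \<and> length xs = N}" by (rule finite_lists_length_eq) simp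
qed

lemma bosh_good:
  fixes X :: "(int \<Rightarrow> 'a::finite) set" and \<mu> :: "(int \<Rightarrow> 'a) measure"
  assumes "limsup (\<lambda>n. ereal (real n * Min ((\<lambda>u. measure \<mu> (cyl X u)) ` lang X n))) > 0"
  shows "\<exists>\<delta>>0. \<forall>K. \<exists>N\<ge>K. \<forall>w\<in>lang X N. \<delta> / N \<le> measure \<mu> (cyl X w)"
proof -
  define A where "A n = real n * Min ((\<lambda>u. measure \<mu> (cyl X u)) ` lang X n)" for n
  have L: "limsup (\<lambda>n. ereal (A n)) > 0" using assms by (simp add: A_def)
  obtain d :: ereal where d: "0 < d" "d < limsup (\<lambda>n. ereal (A n))" using dense[OF L] by blast
  have "\<not> (d \<ge> limsup (\<lambda>n. ereal (A n)))" using d(2) by simp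
  then obtain y where y: "y > d" "\<not> eventually (\<lambda>n. y > ereal (A n)) sequentially"
    unfolding Limsup_le_iff by blast
  have freq: "\<forall>K. \<exists>n\<ge>K. y \<le> ereal (A n)"
    using y(2) unfolding frequently_sequentially[symmetric] not_eventually by (simp add: not_less)
  have dfin: "\<bar>d\<bar> \<noteq> \<infinity>" using d by auto
  define \<delta> where "\<delta> = real_of_ereal d"
  have dd: "d = ereal \<delta>" using dfin unfolding \<delta>_def by (cases d) auto
  have dpos: "\<delta> > 0" using d(1) dd by simp
  have "\<forall>K. \<exists>N\<ge>K. \<forall>w\<in>lang X N. \<delta> / N \<le> measure \<mu> (cyl X w)"
  proof
    fix K
    obtain N where N: "N \<ge> Suc K" "y \<le> ereal (A N)" using freq by blast
    have "ereal \<delta> < ereal (A N)" using less_le_trans[OF y(1)[unfolded dd] N(2)] .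
    then have dA: "\<delta> < A N" by simp
    have Npos: "real N > 0" using N by simp
    have "\<delta> / N \<le> measure \<mu> (cyl X w)" if w: "w \<in> lang X N" for w
    proof -
      have "Min ((\<lambda>u. measure \<mu> (cyl X u)) ` lang X N) \<le> measure \<mu> (cyl X w)"
        by (rule Min_le) (use lang_finite w in auto)
      then have "A N \<le> real N * measure \<mu> (cyl X w)" unfolding A_def using Npos by simp
      then have "\<delta> < real N * measure \<mu> (cyl X w)" using dA by linarith
      then show ?thesis using Npos by (simp add: field_simps)
    qed
    then show "\<exists>N\<ge>K. \<forall>w\<in>lang X N. \<delta> / N \<le> measure \<mu> (cyl X w)" using N(1) by (intro exI[of _ N]) auto
  qed
  then show ?thesis using dpos by blast
qed

theorem corollary3p15:
  fixes X :: "(int \<Rightarrow> 'a::finite) set" and \<mu> :: "(int \<Rightarrow> 'a) measure"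
    and \<alpha> :: real
  assumes "minimal_subshift X"
    and "boshernitzan X"
    and "invariant_prob X \<mu>"
    and "\<forall>\<nu>. invariant_prob X \<nu> \<longrightarrow> \<nu> = \<mu>"
    and "\<alpha> \<in> \<rat>"
    and "L2_eigenvalue \<mu> (exp (2 * pi * \<i> * complex_of_real \<alpha>))"
  shows "topological_eigenvalue X (exp (2 * pi * \<i> * complex_of_real \<alpha>))"
proof -
  note min = assms(1) and inv = assms(3)
  have sub: "subshift X" using min by (simp add: minimal_subshift_def)
  interpret prob_space \<mu> by (rule prob[OF inv sub])
  have spX: "space \<mu> = X" by (rule space_mu[OF inv sub])
  obtain a b :: int where b: "b > 0" and ab: "\<alpha> = of_int a / of_int b" using Rats_cases'[OF assms(5)] by blast
  define nb where "nb = nat b"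
  have nb: "nb > 0" "real nb = real_of_int b" using b by (auto simp: nb_def)
  define z where "z = exp (2 * pi * \<i> * complex_of_real \<alpha>)"
  have z_ab: "z = exp (2 * pi * \<i> * complex_of_real (real_of_int a / real nb))" unfolding z_def ab nb(2) ..
  have z0: "z \<noteq> 0" by (simp add: z_def)
  have znb: "z ^ nb = 1"
  proof -
    have "z ^ nb = exp (of_nat nb * (2 * pi * \<i> * complex_of_real (real_of_int a / real nb)))"
      unfolding z_ab by (simp add: exp_of_nat_mult[symmetric])
    also have "of_nat nb * (2 * pi * \<i> * complex_of_real (real_of_int a / real nb)) = 2 * pi * \<i> * of_int a"
      using nb(1) by (simp add: field_simps)
    also have "exp (2 * pi * \<i> * of_int a) = 1" by (simp add: exp_eq_1)
    finally show ?thesis .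
  qed
  define \<Lambda> where "\<Lambda> = {w::complex. w ^ nb = 1} \<union> {0}"
  have finL: "finite \<Lambda>" unfolding \<Lambda>_def using nb(1) by (simp add: finite_roots_unity)
  have zmul: "z * w \<in> \<Lambda>" if "w \<in> \<Lambda>" for w
    using that znb by (auto simp: \<Lambda>_def power_mult_distrib)
  have zdiv: "w / z \<in> \<Lambda>" if "w \<in> \<Lambda>" for w
    using that znb by (auto simp: \<Lambda>_def power_divide)
  obtain f :: "(int \<Rightarrow> 'a) \<Rightarrow> complex" where fm: "f \<in> borel_measurable \<mu>"
    and fnz: "\<not> (AE x in \<mu>. f x = 0)" and feq: "AE x in \<mu>. f (shift x) = z * f x"
    using assms(6) unfolding L2_eigenvalue_def z_def by blast
  define R where "R x = rnd nb (f x)" for x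
  have RL: "R x \<in> \<Lambda>" for x using rnd_root[OF nb(1), of "f x"] by (auto simp: R_def \<Lambda>_def)
  have Rm: "R \<in> borel_measurable \<mu>" unfolding R_def using fm by measurable
  have Rmeas: "{x \<in> X. R x = c} \<in> sets \<mu>" for c
  proof -
    have "{x \<in> space \<mu>. R x = c} \<in> sets \<mu>" using Rm by measurable
    then show ?thesis using spX by simp
  qed
  have Req: "AE x in \<mu>. R (shift x) = z * R x"
    using feq by eventually_elim (simp add: R_def rnd_eq[OF nb(1) z_ab])
  have Rnz_eq: "{x \<in> X. R x \<noteq> 0} = {x \<in> space \<mu>. f x \<noteq> 0}"
  proof -
    have "\<And>x. (R x \<noteq> 0) = (f x \<noteq> 0)" unfolding R_def using rnd_nz by (auto simp: rnd_def)
    then show ?thesis using spX by simp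
  qed
  have fsets: "{x \<in> space \<mu>. f x \<noteq> 0} \<in> sets \<mu>" using fm by measurable
  have rho: "measure \<mu> {x \<in> X. R x \<noteq> 0} > 0"
  proof (rule ccontr)
    assume "\<not> ?thesis"
    then have "measure \<mu> {x \<in> X. R x \<noteq> 0} = 0" using measure_nonneg[of \<mu> "{x \<in> X. R x \<noteq> 0}"] by linarith
    then have "measure \<mu> {x \<in> space \<mu>. f x \<noteq> 0} = 0" unfolding Rnz_eq .
    then have "emeasure \<mu> {x \<in> space \<mu>. f x \<noteq> 0} = 0" using fsets by (simp add: emeasure_eq_measure)
    then have "AE x in \<mu>. f x = 0" using AE_iff_measurable[OF fsets] by auto
    then show False using fnz by blast
  qed
  obtain \<nu> where nu: "invariant_prob X \<nu>"
    "limsup (\<lambda>n. ereal (real n * Min ((\<lambda>u. measure \<nu> (cyl X u)) ` lang X n))) > 0"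
    using assms(2) unfolding boshernitzan_def by blast
  have "\<nu> = \<mu>" using assms(4) nu(1) by blast
  then obtain \<delta> where dpos: "\<delta> > 0" and good: "\<forall>K. \<exists>N\<ge>K. \<forall>w\<in>lang X N. \<delta> / N \<le> measure \<mu> (cyl X w)"
    using bosh_good[OF nu(2)] by blast
  define \<epsilon> where "\<epsilon> = min (\<delta> / 40) (measure \<mu> {x \<in> X. R x \<noteq> 0} / 8)"
  have eps: "\<epsilon> > 0" using dpos rho by (simp add: \<epsilon>_def)
  obtain l P where Ploc: "\<forall>x y. x \<in> X \<longrightarrow> y \<in> X \<longrightarrow> (\<forall>i. \<bar>i\<bar> \<le> int l \<longrightarrow> y i = x i) \<longrightarrow> P y = P x"
    and Perr: "measure \<mu> {x \<in> X. P x \<noteq> R x} < \<epsilon>"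
    using apxset_fun[OF inv sub finL RL Rmeas eps] by blast
  have "\<exists>G. continuous_map (subtopology shift_top X) euclidean G \<and> (\<exists>x\<in>X. G x \<noteq> 0) \<and>
            (\<forall>x\<in>X. G (shift x) = z * G x)"
  proof (rule core[OF inv sub min finL z0 zmul zdiv RL Rmeas Req _ dpos _ _ _ Perr])
    show "8 * \<epsilon> \<le> measure \<mu> {x \<in> X. R x \<noteq> 0}" by (simp add: \<epsilon>_def)
    show "40 * \<epsilon> \<le> \<delta>" by (simp add: \<epsilon>_def)
    show "\<And>K. \<exists>N\<ge>K. \<forall>w\<in>lang X N. \<delta> / real N \<le> measure \<mu> (cyl X w)" using good by blast
    show "\<And>x y. x \<in> X \<Longrightarrow> y \<in> X \<Longrightarrow> \<forall>i. \<bar>i\<bar> \<le> int l \<longrightarrow> y i = x i \<Longrightarrow> P y = P x" using Ploc by blast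
  qed
  then show ?thesis unfolding topological_eigenvalue_def z_def by blast
qed


end
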